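(* Let $F=F(N,\mathcal D)$ be a GSC. Then $F$ is connected if and only if $Q_3$ is connected.
   Context: GSC: $N\ge2$, $\mathcal D\subset\{0,\dots,N-1\}^2$ with $1<|\mathcal D|<N^2$, $\varphi_i(x)=\frac1N(x+i)$, $F$ the attractor $F=\bigcup_{i\in\mathcal D}\varphi_i(F)$. $Q_0=[0,1]^2$ and $Q_n=\bigcup_{i\in\mathcal D}\varphi_i(Q_{n-1})$ for $n\ge1$. *)

theory Defs
  imports "HOL-Analysis.Analysis"
begin

definition gsc_map :: "nat \<Rightarrow> nat \<times> nat \<Rightarrow> real \<times> real \<Rightarrow> real \<times> real" where
  "gsc_map N i x = ((fst x + real (fst i)) / real N, (snd x + real (snd i)) / real N)"

definition gsc_data :: "nat \<Rightarrow> (nat \<times> nat) set \<Rightarrow> bool" where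
  "gsc_data N D \<longleftrightarrow> 2 \<le> N \<and> D \<subseteq> {0..<N} \<times> {0..<N} \<and> 1 < card D \<and> card D < N^2"

fun gsc_Q :: "nat \<Rightarrow> (nat \<times> nat) set \<Rightarrow> nat \<Rightarrow> (real \<times> real) set" where
  "gsc_Q N D 0 = {0..1} \<times> {0..1}"
| "gsc_Q N D (Suc n) = (\<Union>i\<in>D. gsc_map N i ` gsc_Q N D n)"

definition gsc_attractor :: "nat \<Rightarrow> (nat \<times> nat) set \<Rightarrow> (real \<times> real) set \<Rightarrow> bool" where
  "gsc_attractor N D F \<longleftrightarrow> F \<noteq> {} \<and> compact F \<and> F = (\<Union>i\<in>D. gsc_map N i ` F)"

end

theory Submission
  imports Defs
begin

lemma gm_eq: "gsc_map N i x = (1/real N) *\<^sub>R (x + (real (fst i), real (snd i)))"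
  by (cases x) (simp add: gsc_map_def divide_inverse_commute)

lemma gm_cont: "continuous_on S (gsc_map N i)"
  unfolding gm_eq[abs_def] by (intro continuous_intros)

lemma gm_dist: "N > 0 \<Longrightarrow> dist (gsc_map N i x) (gsc_map N i y) = dist x y / real N"
proof -
  assume "N > 0"
  have "gsc_map N i x - gsc_map N i y = (1/real N) *\<^sub>R (x - y)"
    unfolding gm_eq by (simp add: algebra_simps)
  then show ?thesis using \<open>N>0\<close> by (simp add: dist_norm)
qed

lemma data_finite: "gsc_data N D \<Longrightarrow> finite D"
  unfolding gsc_data_def by (metis card.infinite not_one_less_zero)

lemma data_ne: "gsc_data N D \<Longrightarrow> D \<noteq> {}"
  unfolding gsc_data_def by auto

lemma Q_compact: "finite D \<Longrightarrow> compact (gsc_Q N D n)"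
proof (induction n)
  case 0
  then show ?case by (simp add: compact_Times)
next
  case (Suc n)
  then show ?case
    by (auto intro!: compact_UN compact_continuous_image gm_cont)
qed

lemma Q_ne: "D \<noteq> {} \<Longrightarrow> gsc_Q N D n \<noteq> {}"
  by (induction n) auto

lemma Q1_sub: "gsc_data N D \<Longrightarrow> gsc_Q N D 1 \<subseteq> gsc_Q N D 0"
proof
  fix x assume a: "gsc_data N D" "x \<in> gsc_Q N D 1"
  then obtain i y where i: "i \<in> D" "y \<in> {0..1} \<times> {0..1}" "x = gsc_map N i y" by auto
  have N: "N \<ge> 2" and "fst i < N" "snd i < N" using a(1) i(1) unfolding gsc_data_def by auto
  then have "real (fst i) \<le> real N - 1" "real (snd i) \<le> real N - 1" by linarith+
  with N i show "x \<in> gsc_Q N D 0"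
    by (auto simp: gsc_map_def mem_Times_iff field_simps)
qed

lemma Q_Suc_sub: "gsc_data N D \<Longrightarrow> gsc_Q N D (Suc n) \<subseteq> gsc_Q N D n"
proof (induction n)
  case 0
  then show ?case using Q1_sub by simp
next
  case (Suc n)
  then show ?case by (simp only: gsc_Q.simps) blast
qed

lemma Q_mono: "gsc_data N D \<Longrightarrow> m \<le> n \<Longrightarrow> gsc_Q N D n \<subseteq> gsc_Q N D m"
  using lift_Suc_antimono_le[of "gsc_Q N D"] Q_Suc_sub by metis

lemma Q_box: "gsc_data N D \<Longrightarrow> gsc_Q N D n \<subseteq> {0..1} \<times> {0..1}"
  using Q_mono[of N D 0 n] by simp


lemma attr_bound:
  fixes g :: "real \<times> real \<Rightarrow> real" and h :: "nat \<times> nat \<Rightarrow> nat"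
  assumes N: "N \<ge> 2" and F: "compact F" "F \<noteq> {}" "F = (\<Union>i\<in>D. gsc_map N i ` F)"
    and g: "continuous_on F g" and gh: "\<And>i y. i \<in> D \<Longrightarrow> g (gsc_map N i y) = (g y + real (h i)) / real N"
    and h: "\<And>i. i \<in> D \<Longrightarrow> h i < N"
  shows "\<forall>x\<in>F. 0 \<le> g x \<and> g x \<le> 1"
proof -
  obtain a where a: "a \<in> F" "\<forall>y\<in>F. g y \<le> g a" using continuous_attains_sup[OF F(1,2) g] by blast
  obtain b where b: "b \<in> F" "\<forall>y\<in>F. g b \<le> g y" using continuous_attains_inf[OF F(1,2) g] by blast
  from a(1) F(3) obtain i y where iy: "i \<in> D" "y \<in> F" "a = gsc_map N i y" by blast
  have "g a = (g y + real (h i)) / real N" using gh iy by simp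
  moreover have "g y \<le> g a" using a iy by simp
  moreover have "real (h i) \<le> real N - 1" using h[OF iy(1)] by linarith
  ultimately have "g a * real N \<le> g a + real N - 1" using N by (simp add: field_simps)
  then have "(g a - 1) * (real N - 1) \<le> 0" by (simp add: algebra_simps)
  moreover have "real N - 1 > 0" using N by simp
  ultimately have a1: "g a \<le> 1" by (simp add: mult_le_0_iff)
  from b(1) F(3) obtain j z where jz: "j \<in> D" "z \<in> F" "b = gsc_map N j z" by blast
  have "g b = (g z + real (h j)) / real N" using gh jz by simp
  moreover have "g b \<le> g z" using b jz by simp
  ultimately have "g b * real N \<ge> g b" using N by (simp add: field_simps)
  then have "g b * (real N - 1) \<ge> 0" by (simp add: algebra_simps)
  moreover have "real N - 1 > 0" using N by simp
  ultimately have b0: "g b \<ge> 0" by (simp add: zero_le_mult_iff)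
  show ?thesis using a b a1 b0 by force
qed

lemma attr_box:
  assumes d: "gsc_data N D" and F: "gsc_attractor N D F"
  shows "F \<subseteq> gsc_Q N D 0"
proof -
  have N: "N \<ge> 2" using d unfolding gsc_data_def by auto
  have Fc: "compact F" "F \<noteq> {}" "F = (\<Union>i\<in>D. gsc_map N i ` F)" using F unfolding gsc_attractor_def by auto
  have h: "\<And>i. i \<in> D \<Longrightarrow> fst i < N \<and> snd i < N" using d unfolding gsc_data_def by auto
  have 1: "\<forall>x\<in>F. 0 \<le> fst x \<and> fst x \<le> 1"
    by (rule attr_bound[OF N Fc, where h=fst]) (auto simp: gsc_map_def h intro: continuous_intros)
  have 2: "\<forall>x\<in>F. 0 \<le> snd x \<and> snd x \<le> 1"
    by (rule attr_bound[OF N Fc, where h=snd]) (auto simp: gsc_map_def h intro: continuous_intros)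
  show ?thesis using 1 2 by (auto simp: mem_Times_iff)
qed

lemma attr_Q: "gsc_data N D \<Longrightarrow> gsc_attractor N D F \<Longrightarrow> F \<subseteq> gsc_Q N D n"
proof (induction n)
  case 0 then show ?case using attr_box by blast
next
  case (Suc n)
  then have "F = (\<Union>i\<in>D. gsc_map N i ` F)" unfolding gsc_attractor_def by auto
  moreover have "F \<subseteq> gsc_Q N D n" using Suc by blast
  ultimately show ?case by (simp only: gsc_Q.simps) blast
qed


lemma box_dist: "x \<in> {0..1::real} \<times> {0..1::real} \<Longrightarrow> y \<in> {0..1::real} \<times> {0..1::real} \<Longrightarrow> dist x y \<le> 2"
proof -
  assume x: "x \<in> {0..1::real} \<times> {0..1::real}" and y: "y \<in> {0..1::real} \<times> {0..1::real}"
  obtain a b c d where e: "x = (a,b)" "y = (c,d)" by (cases x, cases y) auto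
  have "dist x y \<le> \<bar>dist a c\<bar> + \<bar>dist b d\<bar>" unfolding e dist_Pair_Pair by (rule sqrt_sum_squares_le_sum_abs)
  also have "\<dots> \<le> 2" using x y e by (auto simp: dist_real_def)
  finally show ?thesis .
qed

lemma cells:
  assumes d: "gsc_data N D" and F: "gsc_attractor N D F"
  shows "\<forall>x\<in>gsc_Q N D n. \<exists>C. connected C \<and> x \<in> C \<and> C \<subseteq> gsc_Q N D n \<and> C \<inter> F \<noteq> {}
            \<and> (\<forall>y\<in>C. dist x y \<le> 2 / real N ^ n)"
proof (induction n)
  case 0
  have sub: "F \<subseteq> gsc_Q N D 0" using attr_box[OF d F] .
  have ne: "F \<noteq> {}" using F unfolding gsc_attractor_def by auto
  have "convex ({0..1::real} \<times> {0..1::real})"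
    by (intro convex_Times convex_real_interval)
  then have cc: "connected (gsc_Q N D 0)"
    by (simp add: convex_connected)
  show ?case
  proof
    fix x assume x: "x \<in> gsc_Q N D 0"
    have dd: "\<forall>y\<in>gsc_Q N D 0. dist x y \<le> 2 / real N ^ 0"
    proof
      fix y assume "y \<in> gsc_Q N D 0"
      then have "dist x y \<le> 2" using box_dist x gsc_Q.simps(1) by metis
      then show "dist x y \<le> 2 / real N ^ 0" by simp
    qed
    have mm: "gsc_Q N D 0 \<inter> F \<noteq> {}" using sub ne by blast
    show "\<exists>C. connected C \<and> x \<in> C \<and> C \<subseteq> gsc_Q N D 0 \<and> C \<inter> F \<noteq> {}
            \<and> (\<forall>y\<in>C. dist x y \<le> 2 / real N ^ 0)"
    proof (rule exI[of _ "gsc_Q N D 0"])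
      show "connected (gsc_Q N D 0) \<and> x \<in> gsc_Q N D 0 \<and> gsc_Q N D 0 \<subseteq> gsc_Q N D 0 \<and> gsc_Q N D 0 \<inter> F \<noteq> {}
            \<and> (\<forall>y\<in>gsc_Q N D 0. dist x y \<le> 2 / real N ^ 0)"
        using cc x mm dd by blast
    qed
  qed
next
  case (Suc n)
  have N: "N \<ge> 2" using d unfolding gsc_data_def by auto
  have Finv0: "F = (\<Union>i\<in>D. gsc_map N i ` F)" using F unfolding gsc_attractor_def by auto
  have Finv: "\<And>i. i \<in> D \<Longrightarrow> gsc_map N i ` F \<subseteq> F"
    by (subst (2) Finv0) (rule UN_upper)
  show ?case
  proof
    fix x assume "x \<in> gsc_Q N D (Suc n)"
    then obtain i y where iy: "i \<in> D" "y \<in> gsc_Q N D n" "x = gsc_map N i y" by auto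
    have "\<exists>C. connected C \<and> y \<in> C \<and> C \<subseteq> gsc_Q N D n \<and> C \<inter> F \<noteq> {}
            \<and> (\<forall>z\<in>C. dist y z \<le> 2 / real N ^ n)" using Suc.IH iy(2) by (rule bspec)
    then obtain C where C: "connected C" "y \<in> C" "C \<subseteq> gsc_Q N D n" "C \<inter> F \<noteq> {}"
        "\<forall>z\<in>C. dist y z \<le> 2 / real N ^ n" by (elim exE conjE) (rule that; assumption)
    show "\<exists>C. connected C \<and> x \<in> C \<and> C \<subseteq> gsc_Q N D (Suc n) \<and> C \<inter> F \<noteq> {}
            \<and> (\<forall>y\<in>C. dist x y \<le> 2 / real N ^ Suc n)"
    proof (intro exI[of _ "gsc_map N i ` C"] conjI)
      show "connected (gsc_map N i ` C)" using C(1) by (intro connected_continuous_image gm_cont)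
      show "x \<in> gsc_map N i ` C" using iy(3) C(2) by blast
      show "gsc_map N i ` C \<subseteq> gsc_Q N D (Suc n)" using iy(1) C(3) by (simp only: gsc_Q.simps) blast
      obtain z where "z \<in> C" "z \<in> F" using C(4) by blast
      then have "gsc_map N i z \<in> gsc_map N i ` C \<inter> F" using Finv[OF iy(1)] by blast
      then show "gsc_map N i ` C \<inter> F \<noteq> {}" by blast
      show "\<forall>w\<in>gsc_map N i ` C. dist x w \<le> 2 / real N ^ Suc n"
      proof
        fix w assume "w \<in> gsc_map N i ` C"
        then obtain z where z: "z \<in> C" "w = gsc_map N i z" by blast
        have "dist x w = dist y z / real N" using iy z gm_dist N by simp
        also have "\<dots> \<le> (2 / real N ^ n) / real N" using C(5) z N by (intro divide_right_mono) auto
        also have "\<dots> = 2 / real N ^ Suc n" by simp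
        finally show "dist x w \<le> 2 / real N ^ Suc n" .
      qed
    qed
  qed
qed

lemma F_eq_Inter:
  assumes d: "gsc_data N D" and F: "gsc_attractor N D F"
  shows "F = (\<Inter>n. gsc_Q N D (n + k))"
proof
  show "F \<subseteq> (\<Inter>n. gsc_Q N D (n + k))" using attr_Q[OF d F] by blast
  show "(\<Inter>n. gsc_Q N D (n + k)) \<subseteq> F"
  proof
    fix x assume x: "x \<in> (\<Inter>n. gsc_Q N D (n + k))"
    have N: "N \<ge> 2" using d unfolding gsc_data_def by auto
    have cF: "closed F" using F unfolding gsc_attractor_def by (auto intro: compact_imp_closed)
    have "\<forall>e>0. \<exists>y\<in>F. dist y x < e"
    proof (intro allI impI)
      fix e :: real assume e: "e > 0"
      obtain m where m: "(1 / real N) ^ m < e / 2" using real_arch_pow_inv[of "e/2" "1/real N"] e N by auto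
      have "x \<in> gsc_Q N D (m + k)" using x by blast
      then have "\<exists>C. connected C \<and> x \<in> C \<and> C \<subseteq> gsc_Q N D (m+k) \<and> C \<inter> F \<noteq> {}
            \<and> (\<forall>y\<in>C. dist x y \<le> 2 / real N ^ (m+k))" using cells[OF d F] by (rule bspec[rotated])
      then obtain C where C: "x \<in> C" "C \<inter> F \<noteq> {}" "\<forall>y\<in>C. dist x y \<le> 2 / real N ^ (m + k)"
        by (elim exE conjE) (rule that; assumption)
      then obtain y where y: "y \<in> C" "y \<in> F" by blast
      have "dist y x \<le> 2 / real N ^ (m + k)" using C(3) y(1) by (metis dist_commute)
      also have "\<dots> \<le> 2 / real N ^ m"
        using N by (intro divide_left_mono power_increasing) auto
      also have "\<dots> = 2 * (1 / real N) ^ m" by (simp add: power_one_over)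
      also have "\<dots> < e" using m by simp
      finally show "\<exists>y\<in>F. dist y x < e" using y by blast
    qed
    then show "x \<in> F" using closed_approachable[OF cF] by blast
  qed
qed

lemma conn_Q_of_F:
  assumes d: "gsc_data N D" and F: "gsc_attractor N D F" and c: "connected F"
  shows "connected (gsc_Q N D n)"
proof -
  let ?Q = "gsc_Q N D n"
  have sub: "F \<subseteq> ?Q" using attr_Q[OF d F] .
  have ne: "F \<noteq> {}" using F unfolding gsc_attractor_def by auto
  have "\<forall>x\<in>?Q. \<exists>C. connected C \<and> x \<in> C \<and> C \<subseteq> ?Q \<and> C \<inter> F \<noteq> {}"
  proof
    fix x assume "x \<in> ?Q"
    then have "\<exists>C. connected C \<and> x \<in> C \<and> C \<subseteq> ?Q \<and> C \<inter> F \<noteq> {}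
            \<and> (\<forall>y\<in>C. dist x y \<le> 2 / real N ^ n)" using cells[OF d F] by (rule bspec[rotated])
    then show "\<exists>C. connected C \<and> x \<in> C \<and> C \<subseteq> ?Q \<and> C \<inter> F \<noteq> {}"
      by (elim exE conjE) (intro exI conjI; assumption)
  qed
  then obtain Cf where Cf: "\<And>x. x \<in> ?Q \<Longrightarrow> connected (Cf x) \<and> x \<in> Cf x \<and> Cf x \<subseteq> ?Q \<and> Cf x \<inter> F \<noteq> {}"
    by metis
  have eq: "?Q = \<Union>((\<lambda>x. Cf x \<union> F) ` ?Q)"
  proof
    show "?Q \<subseteq> \<Union>((\<lambda>x. Cf x \<union> F) ` ?Q)" using Cf by blast
    show "\<Union>((\<lambda>x. Cf x \<union> F) ` ?Q) \<subseteq> ?Q" using Cf sub by (simp add: UN_least)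
  qed
  have "connected (\<Union>((\<lambda>x. Cf x \<union> F) ` ?Q))"
  proof (rule connected_Union)
    show "\<And>s. s \<in> (\<lambda>x. Cf x \<union> F) ` ?Q \<Longrightarrow> connected s" using Cf c by (auto intro!: connected_Un)
    show "\<Inter>((\<lambda>x. Cf x \<union> F) ` ?Q) \<noteq> {}" using ne by blast
  qed
  then show ?thesis using eq by simp
qed


definition pp :: "nat \<Rightarrow> (nat \<times> nat) set \<Rightarrow> nat \<Rightarrow> int \<Rightarrow> int \<Rightarrow> bool" where
  "pp N D n a b \<longleftrightarrow> (\<exists>x\<in>gsc_Q N D n. (fst x + of_int a, snd x + of_int b) \<in> gsc_Q N D n)"

lemma pp_Suc:
  assumes N: "N > 0"
  shows "pp N D (Suc n) a b \<longleftrightarrow> (\<exists>i\<in>D. \<exists>j\<in>D.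
     pp N D n (int N * a + int (fst i) - int (fst j)) (int N * b + int (snd i) - int (snd j)))"
proof
  assume "pp N D (Suc n) a b"
  then obtain x where x: "x \<in> gsc_Q N D (Suc n)" "(fst x + of_int a, snd x + of_int b) \<in> gsc_Q N D (Suc n)"
    unfolding pp_def by blast
  from x(1) obtain i y where iy: "i \<in> D" "y \<in> gsc_Q N D n" "x = gsc_map N i y" by auto
  from x(2) obtain j z where jz: "j \<in> D" "z \<in> gsc_Q N D n" "(fst x + of_int a, snd x + of_int b) = gsc_map N j z" by auto
  have e1: "fst x = (fst y + real (fst i)) / real N" "snd x = (snd y + real (snd i)) / real N"
    using iy(3) by (auto simp: gsc_map_def)
  have e2: "fst x + of_int a = (fst z + real (fst j)) / real N" "snd x + of_int b = (snd z + real (snd j)) / real N"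
    using jz(3) by (auto simp: gsc_map_def)
  have "fst z = fst y + of_int (int N * a + int (fst i) - int (fst j))"
    using e1(1) e2(1) N by (simp add: field_simps)
  moreover have "snd z = snd y + of_int (int N * b + int (snd i) - int (snd j))"
    using e1(2) e2(2) N by (simp add: field_simps)
  ultimately have "(fst y + of_int (int N * a + int (fst i) - int (fst j)), snd y + of_int (int N * b + int (snd i) - int (snd j))) = z"
    by (metis prod.collapse)
  then show "\<exists>i\<in>D. \<exists>j\<in>D.
     pp N D n (int N * a + int (fst i) - int (fst j)) (int N * b + int (snd i) - int (snd j))"
    using iy jz unfolding pp_def by metis
next
  assume "\<exists>i\<in>D. \<exists>j\<in>D.
     pp N D n (int N * a + int (fst i) - int (fst j)) (int N * b + int (snd i) - int (snd j))"
  then obtain i j y where ij: "i \<in> D" "j \<in> D" "y \<in> gsc_Q N D n"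
    "(fst y + of_int (int N * a + int (fst i) - int (fst j)), snd y + of_int (int N * b + int (snd i) - int (snd j))) \<in> gsc_Q N D n"
    unfolding pp_def by blast
  define z where "z = (fst y + of_int (int N * a + int (fst i) - int (fst j)), snd y + of_int (int N * b + int (snd i) - int (snd j)))"
  have xin: "gsc_map N i y \<in> gsc_Q N D (Suc n)" using ij by auto
  have zin: "gsc_map N j z \<in> gsc_Q N D (Suc n)" using ij unfolding z_def by auto
  have "gsc_map N j z = (fst (gsc_map N i y) + of_int a, snd (gsc_map N i y) + of_int b)"
    unfolding z_def gsc_map_def using N by (simp add: field_simps)
  then show "pp N D (Suc n) a b" unfolding pp_def using xin zin by metis
qed

lemma pp_bound:
  assumes d: "gsc_data N D" and p: "pp N D n a b"
  shows "\<bar>a\<bar> \<le> 1 \<and> \<bar>b\<bar> \<le> 1"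
proof -
  obtain x where x: "x \<in> gsc_Q N D n" "(fst x + of_int a, snd x + of_int b) \<in> gsc_Q N D n"
    using p unfolding pp_def by blast
  then have "x \<in> {0..1} \<times> {0..1}" "(fst x + of_int a, snd x + of_int b) \<in> {0..1::real} \<times> {0..1::real}"
    using Q_box[OF d] by blast+
  then have "\<bar>(of_int a::real)\<bar> \<le> 1 \<and> \<bar>(of_int b::real)\<bar> \<le> 1" by (auto simp: mem_Times_iff)
  then show ?thesis by linarith
qed

lemma pp_0: "\<bar>a\<bar> \<le> 1 \<Longrightarrow> \<bar>b\<bar> \<le> 1 \<Longrightarrow> pp N D 0 a b"
proof -
  assume ab: "\<bar>a\<bar> \<le> 1" "\<bar>b\<bar> \<le> 1"
  define x :: "real \<times> real" where "x = (if a < 0 then 1 else 0, if b < 0 then 1 else 0)"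
  have "x \<in> gsc_Q N D 0" unfolding x_def by auto
  moreover have "(fst x + of_int a, snd x + of_int b) \<in> gsc_Q N D 0"
  proof -
    have "a = -1 \<or> a = 0 \<or> a = 1" "b = -1 \<or> b = 0 \<or> b = 1" using ab by linarith+
    then show ?thesis unfolding x_def by auto
  qed
  ultimately show ?thesis unfolding pp_def by blast
qed

lemma pp_00: "D \<noteq> {} \<Longrightarrow> pp N D n 0 0"
  using Q_ne[of D N n] unfolding pp_def by auto

lemma pp_fixed:
  assumes N: "N > 0" and ij: "i \<in> D" "j \<in> D"
    and fa: "int N * a + int (fst i) - int (fst j) = a" and fb: "int N * b + int (snd i) - int (snd j) = b"
    and ab: "\<bar>a\<bar> \<le> 1" "\<bar>b\<bar> \<le> 1"
  shows "pp N D n a b"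
proof (induction n)
  case 0 then show ?case using pp_0 ab by blast
next
  case (Suc n)
  then show ?case unfolding pp_Suc[OF N] using ij fa fb by metis
qed

lemma comp_lemma:
  fixes w c :: int
  assumes "\<bar>w\<bar> \<le> 1" "\<bar>N*w + c\<bar> \<le> 1" "\<bar>c\<bar> \<le> N - 1" "w \<noteq> 0"
  shows "N*w + c = w"
proof -
  have "w = 1 \<or> w = -1" using assms by linarith
  then show ?thesis using assms by auto
qed

lemma digit_diff:
  assumes d: "gsc_data N D" and "i \<in> D" "j \<in> D"
  shows "\<bar>int (fst i) - int (fst j)\<bar> \<le> int N - 1" "\<bar>int (snd i) - int (snd j)\<bar> \<le> int N - 1"
proof -
  have "fst i < N" "fst j < N" "snd i < N" "snd j < N" using assms unfolding gsc_data_def by auto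
  then show "\<bar>int (fst i) - int (fst j)\<bar> \<le> int N - 1" "\<bar>int (snd i) - int (snd j)\<bar> \<le> int N - 1"
    by linarith+
qed

lemma pp_2_3:
  assumes d: "gsc_data N D" and p: "pp N D 2 a b"
  shows "pp N D 3 a b"
proof -
  have N: "N > 0" and N2: "N \<ge> 2" using d unfolding gsc_data_def by auto
  have Dne: "D \<noteq> {}" using data_ne[OF d] .
  have tb: "\<bar>a\<bar> \<le> 1" "\<bar>b\<bar> \<le> 1" using pp_bound[OF d p] by auto
  obtain i j where ij: "i \<in> D" "j \<in> D"
    and p1: "pp N D 1 (int N * a + int (fst i) - int (fst j)) (int N * b + int (snd i) - int (snd j))"
    using p pp_Suc[OF N, of D 1 a b] by (auto simp: numeral_2_eq_2)
  define u1 where "u1 = int N * a + int (fst i) - int (fst j)"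
  define u2 where "u2 = int N * b + int (snd i) - int (snd j)"
  have p1': "pp N D 1 u1 u2" using p1 unfolding u1_def u2_def .
  have ub: "\<bar>u1\<bar> \<le> 1" "\<bar>u2\<bar> \<le> 1" using pp_bound[OF d p1'] by auto
  obtain i' j' where ij': "i' \<in> D" "j' \<in> D"
    and p0: "pp N D 0 (int N * u1 + int (fst i') - int (fst j')) (int N * u2 + int (snd i') - int (snd j'))"
    using p1' pp_Suc[OF N, of D 0 u1 u2] by auto
  define v1 where "v1 = int N * u1 + int (fst i') - int (fst j')"
  define v2 where "v2 = int N * u2 + int (snd i') - int (snd j')"
  have vb: "\<bar>v1\<bar> \<le> 1" "\<bar>v2\<bar> \<le> 1" using pp_bound[OF d p0[folded v1_def v2_def]] by auto
  have c1: "a \<noteq> 0 \<Longrightarrow> u1 = a"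
    using comp_lemma[of a "int N" "int (fst i) - int (fst j)"] tb ub digit_diff[OF d ij] unfolding u1_def by (auto simp: add_diff_eq)
  have c2: "b \<noteq> 0 \<Longrightarrow> u2 = b"
    using comp_lemma[of b "int N" "int (snd i) - int (snd j)"] tb ub digit_diff[OF d ij] unfolding u2_def by (auto simp: add_diff_eq)
  have c3: "u1 \<noteq> 0 \<Longrightarrow> v1 = u1"
    using comp_lemma[of u1 "int N" "int (fst i') - int (fst j')"] vb ub digit_diff[OF d ij'] unfolding v1_def by (auto simp: add_diff_eq)
  have c4: "u2 \<noteq> 0 \<Longrightarrow> v2 = u2"
    using comp_lemma[of u2 "int N" "int (snd i') - int (snd j')"] vb ub digit_diff[OF d ij'] unfolding v2_def by (auto simp: add_diff_eq)
  have three: "(3::nat) = Suc 2" by simp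
  consider "u1 = a \<and> u2 = b" | "v1 = u1 \<and> v2 = u2" | "a = 0 \<and> b = 0"
    using c1 c2 c3 c4 by linarith
  then show ?thesis
  proof cases
    case 1
    then show ?thesis using pp_fixed[OF N ij _ _ tb] unfolding u1_def u2_def by blast
  next
    case 2
    then have "pp N D 2 u1 u2" using pp_fixed[OF N ij' _ _ ub] unfolding v1_def v2_def by blast
    then show ?thesis unfolding three pp_Suc[OF N] using ij unfolding u1_def u2_def by blast
  next
    case 3
    then show ?thesis using pp_00[OF Dne] by simp
  qed
qed

lemma pp_stable:
  assumes d: "gsc_data N D"
  shows "pp N D (k + 2) a b \<longleftrightarrow> pp N D 2 a b"
proof (induction k arbitrary: a b)
  case 0 then show ?case by (simp add: numeral_2_eq_2)
next
  case (Suc k)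
  have N: "N > 0" using d unfolding gsc_data_def by auto
  have "pp N D (Suc k + 2) a b \<longleftrightarrow> pp N D (Suc (k + 2)) a b" by simp
  also have "\<dots> \<longleftrightarrow> pp N D (Suc 2) a b" unfolding pp_Suc[OF N] using Suc.IH by simp
  also have "\<dots> \<longleftrightarrow> pp N D 2 a b"
  proof
    assume "pp N D (Suc 2) a b"
    then have "gsc_Q N D (Suc 2) \<subseteq> gsc_Q N D 2 \<Longrightarrow> pp N D 2 a b" unfolding pp_def by blast
    then show "pp N D 2 a b" using Q_Suc_sub[OF d] by blast
  next
    assume "pp N D 2 a b"
    then show "pp N D (Suc 2) a b" using pp_2_3[OF d] by (simp add: numeral_3_eq_3 numeral_2_eq_2)
  qed
  finally show ?case .
qed

lemma pp_inter:
  assumes N: "N > 0"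
  shows "gsc_map N i ` gsc_Q N D n \<inter> gsc_map N j ` gsc_Q N D n \<noteq> {} \<longleftrightarrow>
     pp N D n (int (fst i) - int (fst j)) (int (snd i) - int (snd j))"
proof
  assume "gsc_map N i ` gsc_Q N D n \<inter> gsc_map N j ` gsc_Q N D n \<noteq> {}"
  then obtain y z where yz: "y \<in> gsc_Q N D n" "z \<in> gsc_Q N D n" "gsc_map N i y = gsc_map N j z" by blast
  then have "z = (fst y + of_int (int (fst i) - int (fst j)), snd y + of_int (int (snd i) - int (snd j)))"
    using N by (cases y, cases z) (auto simp: gsc_map_def field_simps)
  then show "pp N D n (int (fst i) - int (fst j)) (int (snd i) - int (snd j))"
    unfolding pp_def using yz by metis
next
  assume "pp N D n (int (fst i) - int (fst j)) (int (snd i) - int (snd j))"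
  then obtain y where y: "y \<in> gsc_Q N D n"
    "(fst y + of_int (int (fst i) - int (fst j)), snd y + of_int (int (snd i) - int (snd j))) \<in> gsc_Q N D n"
    unfolding pp_def by blast
  have "gsc_map N i y = gsc_map N j (fst y + of_int (int (fst i) - int (fst j)), snd y + of_int (int (snd i) - int (snd j)))"
    using N by (simp add: gsc_map_def field_simps)
  then show "gsc_map N i ` gsc_Q N D n \<inter> gsc_map N j ` gsc_Q N D n \<noteq> {}" using y by blast
qed


lemma transfer_conn:
  fixes A B :: "'i \<Rightarrow> (real \<times> real) set"
  assumes fin: "finite I" and cA: "\<And>i. i \<in> I \<Longrightarrow> closed (A i)"
    and cB: "\<And>i. i \<in> I \<Longrightarrow> connected (B i)"
    and neA: "\<And>i. i \<in> I \<Longrightarrow> A i \<noteq> {}"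
    and dis: "\<And>i j. i \<in> I \<Longrightarrow> j \<in> I \<Longrightarrow> B i \<inter> B j = {} \<Longrightarrow> A i \<inter> A j = {}"
    and conA: "connected (\<Union>i\<in>I. A i)"
  shows "connected (\<Union>i\<in>I. B i)"
proof (rule ccontr)
  have r: "\<And>X Y. closed X \<Longrightarrow> closed Y \<Longrightarrow> S \<subseteq> X \<union> Y \<Longrightarrow> X \<inter> Y \<inter> S = {} \<Longrightarrow> X \<inter> S \<noteq> {} \<Longrightarrow> Y \<inter> S \<noteq> {} \<Longrightarrow> False"
    if "connected S" for S :: "(real \<times> real) set"
    using that unfolding connected_closed by blast
  assume "\<not> connected (\<Union>i\<in>I. B i)"
  then obtain e1 e2 where e: "closed e1" "closed e2" "(\<Union>i\<in>I. B i) \<subseteq> e1 \<union> e2"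
    "e1 \<inter> e2 \<inter> (\<Union>i\<in>I. B i) = {}" "e1 \<inter> (\<Union>i\<in>I. B i) \<noteq> {}" "e2 \<inter> (\<Union>i\<in>I. B i) \<noteq> {}"
    unfolding connected_closed by blast
  have split: "B i \<subseteq> e1 \<or> B i \<subseteq> e2" if i: "i \<in> I" for i
  proof -
    have sub: "B i \<subseteq> e1 \<union> e2" using e(3) i by blast
    have dj: "e1 \<inter> e2 \<inter> B i = {}" using e(4) i by blast
    have "\<not> (e1 \<inter> B i \<noteq> {} \<and> e2 \<inter> B i \<noteq> {})"
      using r[OF cB[OF i] e(1,2) sub dj] by blast
    then show ?thesis using sub by blast
  qed
  define K where "K = {i\<in>I. B i \<subseteq> e1}"
  have sep: "A i \<inter> A j = {}" if "i \<in> K" "j \<in> I - K" for i j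
  proof -
    have "B i \<subseteq> e1" "B j \<subseteq> e2" "i \<in> I" "j \<in> I" using that split unfolding K_def by auto
    then have "B i \<inter> B j \<subseteq> e1 \<inter> e2 \<inter> (\<Union>i\<in>I. B i)" by blast
    then have "B i \<inter> B j = {}" using e(4) by blast
    then show ?thesis using dis \<open>i \<in> I\<close> \<open>j \<in> I\<close> by blast
  qed
  obtain i0 where i0: "i0 \<in> K"
  proof -
    obtain x i where "x \<in> e1" "i \<in> I" "x \<in> B i" using e(5) by blast
    then have "B i \<subseteq> e1" using split e(4) by blast
    then show ?thesis using that \<open>i \<in> I\<close> unfolding K_def by blast
  qed
  obtain j0 where j0: "j0 \<in> I - K"
  proof -
    obtain x j where "x \<in> e2" "j \<in> I" "x \<in> B j" using e(6) by blast
    then have "\<not> B j \<subseteq> e1" using e(4) by blast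
    then show ?thesis using that \<open>j \<in> I\<close> unfolding K_def by blast
  qed
  have KI: "K \<subseteq> I" unfolding K_def by blast
  let ?E1 = "\<Union>i\<in>K. A i" and ?E2 = "\<Union>i\<in>I - K. A i"
  have c1: "closed ?E1" using fin KI cA by (intro closed_UN) (auto intro: finite_subset)
  have c2: "closed ?E2" using fin cA by (intro closed_UN) auto
  have c3: "(\<Union>i\<in>I. A i) \<subseteq> ?E1 \<union> ?E2" unfolding K_def by blast
  have c4: "?E1 \<inter> ?E2 \<inter> (\<Union>i\<in>I. A i) = {}"
  proof (rule equals0I)
    fix x assume "x \<in> ?E1 \<inter> ?E2 \<inter> (\<Union>i\<in>I. A i)"
    then obtain i j where "i \<in> K" "j \<in> I - K" "x \<in> A i" "x \<in> A j" by blast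
    moreover have "A i \<inter> A j = {}" using sep calculation(1,2) .
    ultimately show False by blast
  qed
  have c5: "?E1 \<inter> (\<Union>i\<in>I. A i) \<noteq> {}"
  proof -
    obtain x where "x \<in> A i0" using neA i0 KI by blast
    then show ?thesis using i0 KI by blast
  qed
  have c6: "?E2 \<inter> (\<Union>i\<in>I. A i) \<noteq> {}"
  proof -
    obtain x where "x \<in> A j0" using neA j0 by blast
    then show ?thesis using j0 by blast
  qed
  show False by (rule r[OF conA c1 c2 c3 c4 c5 c6])
qed


lemma conn_all:
  assumes d: "gsc_data N D" and c3: "connected (gsc_Q N D 3)"
  shows "connected (gsc_Q N D (k + 3))"
proof (induction k)
  case 0 then show ?case using c3 by simp
next
  case (Suc k)
  have N: "N > 0" using d unfolding gsc_data_def by auto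
  have fin: "finite D" using data_finite[OF d] .
  have Dne: "D \<noteq> {}" using data_ne[OF d] .
  have eqB: "gsc_Q N D (Suc k + 3) = (\<Union>i\<in>D. gsc_map N i ` gsc_Q N D (k + 3))"
    by (simp only: add_Suc gsc_Q.simps)
  have eqA: "gsc_Q N D 3 = (\<Union>i\<in>D. gsc_map N i ` gsc_Q N D 2)" by (simp add: numeral_3_eq_3 numeral_2_eq_2)
  have "connected (\<Union>i\<in>D. gsc_map N i ` gsc_Q N D (k + 3))"
  proof (rule transfer_conn[where A = "\<lambda>i. gsc_map N i ` gsc_Q N D 2"])
    show "finite D" by (rule fin)
    show "closed (gsc_map N i ` gsc_Q N D 2)" if "i \<in> D" for i
      by (intro compact_imp_closed compact_continuous_image gm_cont Q_compact fin)
    show "connected (gsc_map N i ` gsc_Q N D (k + 3))" if "i \<in> D" for i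
      by (intro connected_continuous_image gm_cont Suc.IH)
    show "gsc_map N i ` gsc_Q N D 2 \<noteq> {}" if "i \<in> D" for i
      using Q_ne[OF Dne] by simp
    show "gsc_map N i ` gsc_Q N D 2 \<inter> gsc_map N j ` gsc_Q N D 2 = {}"
      if "i \<in> D" "j \<in> D" "gsc_map N i ` gsc_Q N D (k + 3) \<inter> gsc_map N j ` gsc_Q N D (k + 3) = {}" for i j
    proof -
      have "\<not> pp N D (k + 3) (int (fst i) - int (fst j)) (int (snd i) - int (snd j))"
        using that(3) pp_inter[OF N, of i D "k+3" j] by blast
      moreover have "Suc k + 2 = k + 3" by simp
      ultimately have "\<not> pp N D (Suc k + 2) (int (fst i) - int (fst j)) (int (snd i) - int (snd j))"
        by metis
      then have "\<not> pp N D 2 (int (fst i) - int (fst j)) (int (snd i) - int (snd j))"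
        using pp_stable[OF d] by blast
      then show ?thesis using pp_inter[OF N, of i D 2 j] by blast
    qed
    show "connected (\<Union>i\<in>D. gsc_map N i ` gsc_Q N D 2)" using c3 eqA by simp
  qed
  then show ?case using eqB by simp
qed

theorem mainTheorem8:
  fixes N :: nat and D :: "(nat \<times> nat) set" and F :: "(real \<times> real) set"
  assumes "gsc_data N D"
    and "gsc_attractor N D F"
  shows "connected F \<longleftrightarrow> connected (gsc_Q N D 3)"
proof
  assume "connected F"
  then show "connected (gsc_Q N D 3)" using conn_Q_of_F[OF assms] by blast
next
  assume c3: "connected (gsc_Q N D 3)"
  have fin: "finite D" using data_finite[OF assms(1)] .
  have "connected (\<Inter>(range (\<lambda>n. gsc_Q N D (n + 3))))"
  proof (rule connected_nest)
    show "compact (gsc_Q N D (n + 3))" for n using Q_compact[OF fin] .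
    show "connected (gsc_Q N D (n + 3))" for n using conn_all[OF assms(1) c3] .
    show "gsc_Q N D (n + 3) \<subseteq> gsc_Q N D (m + 3)" if "m \<le> n" for m n
      using Q_mono[OF assms(1)] that by simp
  qed
  then show "connected F" using F_eq_Inter[OF assms, of 3] by simp
qed

end
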